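(* Let $\nu>0$, $v_0>0$ and $w_0\in\mathbb{R}\setminus\{0\}$, and define for $t\ge0$ $$\omega_{-1}(t)=\frac{w_0e^{\nu t}}{\left(1-\frac{w_0}{1+v_0}t+\frac{e^{\nu t}-1}{2}(1+v_0)\right)^2},\qquad v_c(t)=\frac{-1+\frac{w_0}{1+v_0}t+\frac{e^{\nu t}+1}{2}(1+v_0)}{1-\frac{w_0}{1+v_0}t+\frac{e^{\nu t}-1}{2}(1+v_0)},$$ which solves $\frac{d\omega_{-1}}{dt}=-\nu v_c\omega_{-1}+\frac{2\omega_{-1}^2}{1+v_c}$, $\frac{dv_c}{dt}=\omega_{-1}+\frac{\nu}{2}(1-v_c^2)$ with $v_c(0)=v_0$, $\omega_{-1}(0)=w_0$. Let $\omega(x,0)=\omega_-(x,0)+\overline{\omega_-(\bar x,0)}$ with $\omega_-(x,0)=w_0\left[\frac{1}{\tan(x/2)-\mathrm{i}v_0}-\frac{1}{-\mathrm{i}-\mathrm{i}v_0}\right]$. Suppose collapse occurs, i.e. there is a finite $t_c>0$ such that $v_c(t)\in(0,\infty)$ for $t\in[0,t_c)$ and either $v_c(t)\to0$ or $v_c(t)\to+\infty$ as $t\to t_c^-$. Then $$\|\omega(\cdot,0)\|_{B_0}\ge2e\nu\quad\text{and}\quad \|\omega(\cdot,0)\|_{L^2}\ge\frac{2\sqrt{\pi}\,\nu}{\sqrt{M}},\qquad M=\max_{s\ge0}\left(e^{-2s}-(1-s)^2\right)$$ (so $\|\omega(\cdot,0)\|_{L^2}\gtrsim 8.81\,\nu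$).
   Context: This is the single complex-conjugate pole-pair solution of the generalized Constantin–Lax–Majda equation with $a=0$, $\sigma=1$, zero mean ($\omega_{av}=0$) and real data, on the circle. Norms: $\|f\|_{L^2}^2=\int_{-\pi}^{\pi}|f|^2dx$ and $\|f\|_{B_0}=\sum_{k\in\mathbb{Z}}|\hat f_k|$ with $\hat f_k=\frac{1}{2\pi}\int_{-\pi}^{\pi}f(x)e^{-\mathrm{i}kx}dx$; explicitly $\|\omega(\cdot,0)\|_{L^2}^2=\frac{4\pi w_0^2}{v_0(1+v_0)^2}$ and $\|\omega(\cdot,0)\|_{B_0}=\frac{|w_0|}{v_0}\left(\left|\frac{1-v_0}{1+v_0}\right|+1\right)$. *)

theory Defs
  imports "HOL-Analysis.Analysis"
begin

text \<open>Pole-pair solution of the generalized CLM equation (a = 0, sigma = 1).\<close>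

definition clm_den :: "real \<Rightarrow> real \<Rightarrow> real \<Rightarrow> real \<Rightarrow> real" where
  "clm_den \<nu> v0 w0 t = 1 - w0 / (1 + v0) * t + (exp (\<nu> * t) - 1) / 2 * (1 + v0)"

definition omega_m1 :: "real \<Rightarrow> real \<Rightarrow> real \<Rightarrow> real \<Rightarrow> real" where
  "omega_m1 \<nu> v0 w0 t = w0 * exp (\<nu> * t) / (clm_den \<nu> v0 w0 t)^2"

definition v_c :: "real \<Rightarrow> real \<Rightarrow> real \<Rightarrow> real \<Rightarrow> real" where
  "v_c \<nu> v0 w0 t =
     (-1 + w0 / (1 + v0) * t + (exp (\<nu> * t) + 1) / 2 * (1 + v0)) / clm_den \<nu> v0 w0 t"

text \<open>Initial data on the circle, x in [-pi,pi] (real x, so conj x = x).\<close>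

definition omega_minus0 :: "real \<Rightarrow> real \<Rightarrow> real \<Rightarrow> complex" where
  "omega_minus0 v0 w0 x =
     complex_of_real w0 * (1 / (complex_of_real (tan (x / 2)) - \<i> * complex_of_real v0)
                           - 1 / (- \<i> - \<i> * complex_of_real v0))"

definition omega0 :: "real \<Rightarrow> real \<Rightarrow> real \<Rightarrow> complex" where
  "omega0 v0 w0 x = omega_minus0 v0 w0 x + cnj (omega_minus0 v0 w0 x)"

definition L2_norm :: "(real \<Rightarrow> complex) \<Rightarrow> real" where
  "L2_norm f = sqrt (integral {-pi..pi} (\<lambda>x. (cmod (f x))^2))"

definition fourier_coeff :: "(real \<Rightarrow> complex) \<Rightarrow> int \<Rightarrow> complex" where
  "fourier_coeff f k =
     integral {-pi..pi} (\<lambda>x. f x * exp (- \<i> * of_int k * complex_of_real x)) / (2 * complex_of_real pi)"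

definition B0_norm :: "(real \<Rightarrow> complex) \<Rightarrow> real" where
  "B0_norm f = infsum (\<lambda>k::int. cmod (fourier_coeff f k)) UNIV"

end

theory Submission
  imports Defs
begin


lemma exp_int_pi: "exp (- \<i> * of_int k * of_real pi) = exp (\<i> * of_int k * of_real pi)"
proof -
  have "exp (\<i> * of_int k * of_real pi) = exp (- \<i> * of_int k * of_real pi + \<i> * (of_int k * (of_real pi * 2)))"
    by (simp add: algebra_simps)
  also have "\<dots> = exp (- \<i> * of_int k * of_real pi)" by (rule exp_plus_2pin)
  finally show ?thesis by simp
qed

lemma int_exp:
  "((\<lambda>x::real. exp (- \<i> * of_int k * of_real x)) has_integral (if k = 0 then 2*pi else 0)) {-pi..pi}"
proof (cases "k = 0")
  case True
  then show ?thesis using has_integral_const_real[of "1::complex" "-pi" pi]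
    by (simp add: scaleR_conv_of_real)
next
  case False
  let ?c = "- \<i> * of_int k :: complex"
  have c0: "?c \<noteq> 0" using False by simp
  have "((\<lambda>x::real. exp (?c * of_real x)) has_integral
         (exp (?c * of_real pi) / ?c - exp (?c * of_real (-pi)) / ?c)) {-pi..pi}"
  proof (rule fundamental_theorem_of_calculus)
    show "- pi \<le> pi" by simp
    fix x :: real
    have "((\<lambda>z. exp (?c * z) / ?c) has_field_derivative exp (?c * of_real x)) (at (of_real x))"
      using c0 by (auto intro!: derivative_eq_intros)
    then show "((\<lambda>x. exp (?c * of_real x) / ?c) has_vector_derivative exp (?c * of_real x)) (at x within {-pi..pi})"
      by (rule has_vector_derivative_real_field)
  qed
  moreover have "exp (?c * of_real pi) = exp (?c * of_real (-pi))"
    using exp_int_pi[of k] by (simp add: mult.assoc)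
  ultimately show ?thesis using False by (simp add: mult.assoc)
qed



lemma zero_by_contraction:
  fixes X :: "nat \<Rightarrow> complex" and a :: real
  assumes rec: "\<And>n. X n = of_real a * X (Suc n)" and bnd: "\<And>n. norm (X n) \<le> B" and a: "\<bar>a\<bar> < 1"
  shows "X 0 = 0"
proof -
  have eq: "X 0 = of_real a ^ n * X n" for n
  proof (induction n)
    case (Suc n)
    then show ?case using rec[of n] by (simp add: mult.assoc)
  qed simp
  have le: "norm (X 0) \<le> \<bar>a\<bar> ^ n * B" for n
  proof -
    have "norm (X 0) = \<bar>a\<bar> ^ n * norm (X n)" using eq[of n] by (simp add: norm_mult norm_power)
    also have "\<dots> \<le> \<bar>a\<bar> ^ n * B" using bnd[of n] by (simp add: mult_left_mono)
    finally show ?thesis .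
  qed
  have lim: "(\<lambda>n. \<bar>a\<bar> ^ n * B) \<longlonglongrightarrow> 0 * B"
    by (intro tendsto_mult tendsto_const LIMSEQ_power_zero) (use a in auto)
  have "norm (X 0) \<le> 0"
    using tendsto_le[OF _ lim tendsto_const, of "norm (X 0)"] le by simp
  then show ?thesis by simp
qed



lemma den_bound:
  assumes "\<bar>a\<bar> < 1"
  shows "norm (exp (\<i> * of_real x) - of_real a) \<ge> 1 - \<bar>a\<bar>"
    and "exp (\<i> * complex_of_real x) - of_real a \<noteq> 0"
proof -
  have "norm (exp (\<i> * of_real x)) - norm (complex_of_real a) \<le> norm (exp (\<i> * of_real x) - of_real a)"
    by (rule norm_triangle_ineq2)
  then show 1: "norm (exp (\<i> * of_real x) - of_real a) \<ge> 1 - \<bar>a\<bar>" by simp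
  then show "exp (\<i> * complex_of_real x) - of_real a \<noteq> 0" using assms by auto
qed

lemma norm_ek: "norm (exp (- \<i> * of_int k * of_real x)) = 1"
proof -
  have "- \<i> * of_int k * of_real x = \<i> * of_real (- of_int k * x)" by simp
  then show ?thesis by (simp only: norm_exp_i_times)
qed

definition Iint :: "real \<Rightarrow> int \<Rightarrow> complex" where
  "Iint a k = integral {-pi..pi} (\<lambda>x. exp (- \<i> * of_int k * of_real x) / (exp (\<i> * of_real x) - of_real a))"

definition Kint :: "real \<Rightarrow> int \<Rightarrow> complex" where
  "Kint a k = integral {-pi..pi} (\<lambda>x. exp (- \<i> * of_int k * of_real x) / (exp (\<i> * of_real x) - of_real a)^2)"

lemma Iint_integrable:
  assumes "\<bar>a\<bar> < 1"
  shows "(\<lambda>x. exp (- \<i> * of_int k * of_real x) / (exp (\<i> * of_real x) - of_real a)) integrable_on {-pi..pi}"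
  by (intro integrable_continuous_interval continuous_intros) (use den_bound[OF assms] in auto)

lemma Kint_integrable:
  assumes "\<bar>a\<bar> < 1"
  shows "(\<lambda>x. exp (- \<i> * of_int k * of_real x) / (exp (\<i> * of_real x) - of_real a)^2) integrable_on {-pi..pi}"
  by (intro integrable_continuous_interval continuous_intros) (use den_bound[OF assms] in auto)

lemma int_bound:
  fixes f :: "real \<Rightarrow> complex"
  assumes "f integrable_on {-pi..pi}" "\<And>x. norm (f x) \<le> B"
  shows "norm (integral {-pi..pi} f) \<le> B * (2*pi)"
proof -
  have B: "0 \<le> B" using assms(2)[of 0] norm_ge_zero order_trans by blast
  have "f integrable_on cbox (-pi) pi" using assms(1) by simp
  then show ?thesis
    using has_integral_bound[OF B, of f "integral (cbox (-pi) pi) f" "-pi" pi] assms(2)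
    by (simp add: integrable_integral)
qed

lemma Iint_bound:
  assumes "\<bar>a\<bar> < 1"
  shows "norm (Iint a k) \<le> (2*pi) / (1 - \<bar>a\<bar>)"
proof -
  have "norm (Iint a k) \<le> (1 / (1 - \<bar>a\<bar>)) * (2*pi)"
    unfolding Iint_def
  proof (rule int_bound[OF Iint_integrable[OF assms]])
    fix x
    have "norm (exp (- \<i> * of_int k * of_real x)) = 1"
      by (rule norm_ek)
    then show "norm (exp (- \<i> * of_int k * of_real x) / (exp (\<i> * of_real x) - of_real a)) \<le> 1 / (1 - \<bar>a\<bar>)"
      using den_bound[OF assms, of x] assms by (simp add: norm_divide frac_le)
  qed
  then show ?thesis by simp
qed

lemma Kint_bound:
  assumes "\<bar>a\<bar> < 1"
  shows "norm (Kint a k) \<le> (2*pi) / (1 - \<bar>a\<bar>)^2"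
proof -
  have "norm (Kint a k) \<le> (1 / (1 - \<bar>a\<bar>)^2) * (2*pi)"
    unfolding Kint_def
  proof (rule int_bound[OF Kint_integrable[OF assms]])
    fix x
    have "norm (exp (- \<i> * of_int k * of_real x)) = 1"
      by (rule norm_ek)
    moreover have "(1 - \<bar>a\<bar>)^2 \<le> norm (exp (\<i> * of_real x) - of_real a)^2"
      using den_bound[OF assms, of x] assms by (intro power_mono) auto
    ultimately show "norm (exp (- \<i> * of_int k * of_real x) / (exp (\<i> * of_real x) - of_real a)^2) \<le> 1 / (1 - \<bar>a\<bar>)^2"
      using assms by (simp add: norm_divide norm_power frac_le)
  qed
  then show ?thesis by simp
qed

lemma alg1: assumes "(Z::complex) \<noteq> a" shows "(E*Z)/(Z-a) - a*(E/(Z-a)) = E"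
proof -
  have "Z - a \<noteq> 0" using assms by simp
  have "(E*Z)/(Z-a) - a*(E/(Z-a)) = E*(Z-a)/(Z-a)" by (simp add: diff_divide_distrib algebra_simps)
  then show ?thesis using \<open>Z - a \<noteq> 0\<close> by simp
qed

lemma alg2: assumes "(Z::complex) \<noteq> a" shows "(E*Z)/(Z-a)^2 - a*(E/(Z-a)^2) = E/(Z-a)"
proof -
  have "Z - a \<noteq> 0" using assms by simp
  have "(E*Z)/(Z-a)^2 - a*(E/(Z-a)^2) = (E*(Z-a))/((Z-a)*(Z-a))" by (simp add: diff_divide_distrib algebra_simps power2_eq_square)
  then show ?thesis using \<open>Z - a \<noteq> 0\<close> by simp
qed

lemma exp_shift: "exp (- \<i> * of_int (k - 1) * of_real x) = exp (- \<i> * of_int k * of_real x) * exp (\<i> * of_real x)"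
  by (simp add: exp_add[symmetric] algebra_simps)

lemma Iint_rec:
  assumes "\<bar>a\<bar> < 1"
  shows "Iint a (k - 1) = of_real a * Iint a k + (if k = 0 then 2 * pi else 0)"
proof -
  let ?f = "\<lambda>k x. exp (- \<i> * of_int k * of_real x) / (exp (\<i> * of_real x) - of_real a)"
  have "\<And>x. ?f (k-1) x - of_real a * ?f k x = exp (- \<i> * of_int k * of_real x)"
    unfolding exp_shift using den_bound(2)[OF assms] by (intro alg1) auto
  then have "integral {-pi..pi} (\<lambda>x. ?f (k-1) x - of_real a * ?f k x) = (if k = 0 then 2 * pi else 0)"
    using integral_unique[OF int_exp[of k]] by simp
  moreover have "integral {-pi..pi} (\<lambda>x. ?f (k-1) x - of_real a * ?f k x) = Iint a (k-1) - of_real a * Iint a k"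
    unfolding Iint_def
    by (simp only: integral_diff[OF Iint_integrable[OF assms] integrable_on_mult_right[OF Iint_integrable[OF assms]]] integral_mult_right)
  ultimately show ?thesis by (simp add: algebra_simps)
qed

lemma Kint_rec:
  assumes "\<bar>a\<bar> < 1"
  shows "Kint a (k - 1) = of_real a * Kint a k + Iint a k"
proof -
  let ?f = "\<lambda>k x. exp (- \<i> * of_int k * of_real x) / (exp (\<i> * of_real x) - of_real a)^2"
  let ?g = "\<lambda>k x. exp (- \<i> * of_int k * of_real x) / (exp (\<i> * of_real x) - of_real a)"
  have "\<And>x. ?f (k-1) x - of_real a * ?f k x = ?g k x"
    unfolding exp_shift using den_bound(2)[OF assms] by (intro alg2) auto
  then have "integral {-pi..pi} (\<lambda>x. ?f (k-1) x - of_real a * ?f k x) = Iint a k"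
    unfolding Iint_def by simp
  moreover have "integral {-pi..pi} (\<lambda>x. ?f (k-1) x - of_real a * ?f k x) = Kint a (k-1) - of_real a * Kint a k"
    unfolding Kint_def
    by (simp only: integral_diff[OF Kint_integrable[OF assms] integrable_on_mult_right[OF Kint_integrable[OF assms]]] integral_mult_right)
  ultimately show ?thesis by (simp add: algebra_simps)
qed



lemma Iint_nonneg:
  assumes "\<bar>a\<bar> < 1"
  shows "Iint a (int n) = 0"
proof -
  define X where "X m = Iint a (int (n + m))" for m
  have "X m = of_real a * X (Suc m)" for m
    using Iint_rec[OF assms, of "int (n + Suc m)"] unfolding X_def by simp
  moreover have "norm (X m) \<le> (2*pi) / (1 - \<bar>a\<bar>)" for m
    unfolding X_def by (rule Iint_bound[OF assms])
  ultimately have "X 0 = 0" by (intro zero_by_contraction[OF _ _ assms])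
  then show ?thesis by (simp add: X_def)
qed

lemma Iint_neg:
  assumes "\<bar>a\<bar> < 1"
  shows "Iint a (- int n - 1) = 2 * pi * of_real a ^ n"
proof (induction n)
  case 0
  then show ?case using Iint_rec[OF assms, of 0] Iint_nonneg[OF assms, of 0] by simp
next
  case (Suc n)
  have "Iint a ((- int n - 1) - 1) = of_real a * Iint a (- int n - 1)"
    using Iint_rec[OF assms, of "- int n - 1"] by simp
  then show ?case using Suc by (simp add: algebra_simps)
qed

lemma Kint0:
  assumes "\<bar>a\<bar> < 1"
  shows "Kint a 0 = 0"
proof -
  define X where "X m = Kint a (int m)" for m
  have "X m = of_real a * X (Suc m)" for m
    using Kint_rec[OF assms, of "int (Suc m)"] Iint_nonneg[OF assms, of "Suc m"] unfolding X_def by simp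
  moreover have "norm (X m) \<le> (2*pi) / (1 - \<bar>a\<bar>)^2" for m
    unfolding X_def by (rule Kint_bound[OF assms])
  ultimately have "X 0 = 0" by (intro zero_by_contraction[OF _ _ assms])
  then show ?thesis by (simp add: X_def)
qed



lemma omega0_tan:
  assumes "v0 > 0"
  shows "omega0 v0 w0 x = complex_of_real (2 * w0 * tan (x/2) / ((tan (x/2))^2 + v0^2))"
proof -
  define T where "T = tan (x/2)"
  have d: "T^2 + v0^2 > 0" using assms by (simp add: add_nonneg_pos)
  have "Re (omega_minus0 v0 w0 x) = w0 * T / (T^2 + v0^2)"
    unfolding omega_minus0_def T_def[symmetric] using d
    by (simp add: Re_divide power2_eq_square field_simps)
  moreover have "omega0 v0 w0 x = complex_of_real (2 * Re (omega_minus0 v0 w0 x))"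
    unfolding omega0_def by (simp add: complex_add_cnj)
  ultimately show ?thesis by (simp add: T_def)
qed

lemma tan_form:
  assumes "v0 > 0"
  shows "2 * w0 * tan (x/2) / ((tan (x/2))^2 + v0^2)
       = 2 * w0 * sin (x/2) * cos (x/2) / ((sin (x/2))^2 + v0^2 * (cos (x/2))^2)"
proof (cases "cos (x/2) = 0")
  case True
  then show ?thesis by (simp add: tan_def)
next
  case False
  then show ?thesis using assms by (simp add: tan_def field_simps power2_eq_square)
qed



lemma g_re:
  fixes a k x :: real
  shows "\<i> * of_real k / (exp (\<i> * of_real x) - of_real a) + cnj (\<i> * of_real k / (exp (\<i> * of_real x) - of_real a))
        = complex_of_real (2 * k * sin x / ((cos x - a)^2 + (sin x)^2))"
proof -
  have r: "Re (\<i> * of_real k / (exp (\<i> * of_real x) - of_real a)) = k * sin x / ((cos x - a)^2 + (sin x)^2)"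
    by (simp add: Re_divide power2_eq_square cis_conv_exp[symmetric])
  show ?thesis by (simp only: complex_add_cnj r) (simp add: mult.assoc)
qed

lemma mini: "(p::real) \<noteq> 0 \<Longrightarrow> (N/p)^2 + Y = (N^2 + p^2*Y)/p^2"
  by (simp add: power_divide field_simps)

lemma mini2: "(P::real) \<noteq> 0 \<Longrightarrow> Q \<noteq> 0 \<Longrightarrow> (2*w0/P) * (2 * sa * ca) / (4 * Q / P) = w0 * sa * ca / Q"
  by (simp add: field_simps)

lemma real_form:
  fixes v0 w0 x :: real
  assumes "v0 > 0"
  shows "(2*w0/(1+v0)^2) * sin x / ((cos x - (1-v0)/(1+v0))^2 + (sin x)^2)
       = w0 * sin (x/2) * cos (x/2) / ((sin (x/2))^2 + v0^2 * (cos (x/2))^2)"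
proof -
  define sa ca where "sa = sin (x/2)" and "ca = cos (x/2)"
  have sx: "sin x = 2 * sa * ca" unfolding sa_def ca_def using sin_double[of "x/2"] by simp
  have cx: "cos x = ca^2 - sa^2" unfolding sa_def ca_def using cos_double[of "x/2"] by simp
  have sc: "sa^2 + ca^2 = 1" unfolding sa_def ca_def by simp
  have p: "1 + v0 > 0" using assms by simp
  have D: "(cos x - (1-v0)/(1+v0))^2 + (sin x)^2 = 4 * (sa^2 + v0^2 * ca^2) / (1+v0)^2"
  proof -
    have "((1+v0) * (ca^2 - sa^2) - (1-v0))^2 + (1+v0)^2 * (2 * sa * ca)^2 = 4 * (sa^2 + v0^2 * ca^2)"
    proof -
      have s2: "sa^2 = 1 - ca^2" using sc by simp
      have "((1+v0) * (ca^2 - sa^2) - (1-v0))^2 + (1+v0)^2 * (2 * sa * ca)^2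
          = ((1+v0) * (2*ca^2 - 1) - (1-v0))^2 + (1+v0)^2 * 4 * sa^2 * ca^2"
        using s2 by (simp add: power_mult_distrib)
      also have "\<dots> = 4 * (sa^2 + v0^2 * ca^2)"
        unfolding s2 by (simp add: power2_eq_square algebra_simps)
      finally show ?thesis .
    qed
    moreover have "cos x - (1-v0)/(1+v0) = ((1+v0) * (ca^2 - sa^2) - (1-v0)) / (1+v0)"
      unfolding cx using p by (simp add: field_simps)
    ultimately show ?thesis using p mini[of "1+v0" "(1+v0) * (ca^2 - sa^2) - (1-v0)" "(2 * sa * ca)^2"]
      by (simp only: sx)
  qed
  have pos: "sa^2 + v0^2 * ca^2 > 0"
  proof -
    have "sa \<noteq> 0 \<or> ca \<noteq> 0" using sc by auto
    then show ?thesis using assms by (auto intro: add_pos_nonneg add_nonneg_pos)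
  qed
  have "(2*w0/(1+v0)^2) * sin x / ((cos x - (1-v0)/(1+v0))^2 + (sin x)^2)
      = (2*w0/(1+v0)^2) * (2 * sa * ca) / (4 * (sa^2 + v0^2 * ca^2) / (1+v0)^2)"
    by (subst D, subst sx, rule refl)
  also have "\<dots> = w0 * sa * ca / (sa^2 + v0^2 * ca^2)"
    using pos p mini2[of "(1+v0)^2" "sa^2 + v0^2 * ca^2" w0 sa ca] by simp
  finally show ?thesis unfolding sa_def ca_def .
qed



lemma int_geom_has_sum:
  fixes q r :: real
  assumes q: "0 \<le> q" "q < 1" and r: "r \<ge> 0"
  shows "((\<lambda>k::int. if k = 0 then 0 else r * q ^ (nat \<bar>k\<bar> - 1)) has_sum (2 * r / (1 - q))) UNIV"
proof -
  define F where "F = (\<lambda>k::int. if k = 0 then 0 else r * q ^ (nat \<bar>k\<bar> - 1))"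
  have "(\<lambda>n. r * q ^ n) sums (r * (1 / (1 - q)))"
    by (intro sums_mult geometric_sums) (use q in auto)
  then have hs: "((\<lambda>n. r * q ^ n) has_sum (r / (1 - q))) UNIV"
    by (intro sums_nonneg_imp_has_sum) (use q r in auto)
  define h1 where "h1 = (\<lambda>n::nat. int n + 1)"
  define h2 where "h2 = (\<lambda>n::nat. - int n - 1)"
  have inj1: "inj h1" unfolding h1_def by (auto intro: injI)
  have inj2: "inj h2" unfolding h2_def by (auto intro: injI)
  have c1: "F \<circ> h1 = (\<lambda>n. r * q ^ n)" unfolding F_def h1_def by (auto simp: fun_eq_iff nat_add_distrib)
  have c2: "F \<circ> h2 = (\<lambda>n. r * q ^ n)"
  proof (rule ext)
    fix n :: nat
    have e: "\<bar>- int n - 1\<bar> = int n + 1" by simp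
    have "nat \<bar>- int n - 1\<bar> - 1 = n" unfolding e by (simp add: nat_add_distrib)
    then show "(F \<circ> h2) n = r * q ^ n" unfolding F_def h2_def by simp
  qed
  have A: "(F has_sum (r / (1 - q))) (range h1)"
    using has_sum_reindex[OF inj1, of F] c1 hs by simp
  have B: "(F has_sum (r / (1 - q))) (range h2)"
    using has_sum_reindex[OF inj2, of F] c2 hs by simp
  have disj: "range h1 \<inter> range h2 = {}" unfolding h1_def h2_def by auto
  have AB: "(F has_sum (r / (1 - q) + r / (1 - q))) (range h1 \<union> range h2)"
    by (rule has_sum_Un_disjoint[OF A B disj])
  have notin: "0 \<notin> range h1 \<union> range h2" unfolding h1_def h2_def by auto
  have U: "insert 0 (range h1 \<union> range h2) = UNIV"
  proof (safe)
    fix k :: int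
    assume "k \<notin> range h2" "k \<noteq> 0"
    show "k \<in> range h1"
    proof (cases "k > 0")
      case True
      then have "k = h1 (nat (k - 1))" unfolding h1_def by simp
      then show ?thesis by blast
    next
      case False
      then have "k = h2 (nat (- k - 1))" using \<open>k \<noteq> 0\<close> unfolding h2_def by simp
      then show ?thesis using \<open>k \<notin> range h2\<close> by blast
    qed
  qed auto
  have "(F has_sum (F 0 + (r / (1 - q) + r / (1 - q)))) (insert 0 (range h1 \<union> range h2))"
    by (rule has_sum_insert[OF notin AB])
  then show ?thesis unfolding U by (simp add: F_def)
qed



definition gfun :: "real \<Rightarrow> real \<Rightarrow> real \<Rightarrow> complex" where
  "gfun v0 w0 x = \<i> * of_real (2*w0/(1+v0)^2) / (exp (\<i> * of_real x) - of_real ((1-v0)/(1+v0)))"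

lemma omega0_g:
  assumes "v0 > 0"
  shows "omega0 v0 w0 x = gfun v0 w0 x + cnj (gfun v0 w0 x)"
proof -
  have 1: "omega0 v0 w0 x = of_real (2 * w0 * sin (x/2) * cos (x/2) / ((sin (x/2))^2 + v0^2 * (cos (x/2))^2))"
    by (simp only: omega0_tan[OF assms(1)] tan_form[OF assms(1)])
  have 2: "gfun v0 w0 x + cnj (gfun v0 w0 x) = of_real (2 * (2*w0/(1+v0)^2) * sin x / ((cos x - (1-v0)/(1+v0))^2 + (sin x)^2))"
    by (simp only: gfun_def g_re)
  have 3: "2 * (2*w0/(1+v0)^2) * sin x / ((cos x - (1-v0)/(1+v0))^2 + (sin x)^2)
      = 2 * w0 * sin (x/2) * cos (x/2) / ((sin (x/2))^2 + v0^2 * (cos (x/2))^2)"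
    using real_form[OF assms(1), of w0 x] by (simp add: mult.assoc times_divide_eq_right[symmetric] del: times_divide_eq_right)
  show ?thesis by (simp only: 1 2 3)
qed

lemma a_bound:
  fixes v0 :: real
  assumes "v0 > 0"
  shows "\<bar>(1-v0)/(1+v0)\<bar> < 1"
proof -
  have p: "1+v0 > 0" using assms by linarith
  have "(1-v0) < 1*(1+v0)" using assms by simp
  then have 1: "(1-v0)/(1+v0) < 1" using p by (simp only: divide_less_eq) simp
  have "-1*(1+v0) < 1 - v0" using assms by simp
  then have 2: "-1 < (1-v0)/(1+v0)" using p by (simp only: less_divide_eq) simp
  show ?thesis using 1 2 by (simp only: abs_less_iff) simp
qed

lemma cnj_exp_k: "cnj (exp (- \<i> * of_int (-k) * of_real x)) = exp (- \<i> * of_int k * of_real x)"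
  by (simp add: exp_cnj)

lemma cnj_exp2: "cnj (exp (\<i> * of_int k * of_real x)) = exp (- (\<i> * of_int k * of_real x))"
  by (simp add: exp_cnj)

lemma fourier_omega0:
  fixes v0 w0 :: real and k :: int
  assumes "v0 > 0"
  defines "a \<equiv> (1-v0)/(1+v0)" and "c0 \<equiv> \<i> * of_real (2*w0/(1+v0)^2)"
  shows "fourier_coeff (omega0 v0 w0) k = (c0 * Iint a k + cnj (c0 * Iint a (-k))) / (2 * pi)"
proof -
  have a: "\<bar>a\<bar> < 1" unfolding a_def by (rule a_bound[OF assms(1)])
  let ?f = "\<lambda>k x. exp (- \<i> * of_int k * of_real x) / (exp (\<i> * of_real x) - of_real a)"
  have eq: "omega0 v0 w0 x * exp (- \<i> * of_int k * of_real x) = c0 * ?f k x + cnj (c0 * ?f (-k) x)" for x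
  proof -
    have "cnj (c0 * ?f (-k) x) = cnj (gfun v0 w0 x) * exp (- \<i> * of_int k * of_real x)"
      unfolding gfun_def a_def c0_def by (simp add: cnj_exp2)
    moreover have "c0 * ?f k x = gfun v0 w0 x * exp (- \<i> * of_int k * of_real x)"
      unfolding gfun_def a_def c0_def by simp
    ultimately show ?thesis unfolding omega0_g[OF assms(1)] by (simp add: algebra_simps)
  qed
  have i1: "(\<lambda>x. c0 * ?f k x) integrable_on {-pi..pi}"
    by (intro integrable_on_mult_right Iint_integrable[OF a])
  have i2: "(\<lambda>x. cnj (c0 * ?f (-k) x)) integrable_on {-pi..pi}"
    unfolding integrable_on_cnj_iff by (intro integrable_on_mult_right Iint_integrable[OF a])
  have "integral {-pi..pi} (\<lambda>x. omega0 v0 w0 x * exp (- \<i> * of_int k * of_real x))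
      = integral {-pi..pi} (\<lambda>x. c0 * ?f k x) + integral {-pi..pi} (\<lambda>x. cnj (c0 * ?f (-k) x))"
    unfolding eq by (rule integral_add[OF i1 i2])
  also have "\<dots> = c0 * Iint a k + cnj (c0 * Iint a (-k))"
    unfolding Iint_def integral_mult_right integral_cnj[symmetric] by simp
  finally show ?thesis unfolding fourier_coeff_def by simp
qed



lemma coeff_norm:
  fixes v0 w0 :: real and k :: int
  assumes v0: "v0 > 0"
  shows "cmod (fourier_coeff (omega0 v0 w0) k)
       = (if k = 0 then 0 else \<bar>2*w0/(1+v0)^2\<bar> * \<bar>(1-v0)/(1+v0)\<bar> ^ (nat \<bar>k\<bar> - 1))"
proof -
  define a where "a = (1-v0)/(1+v0)"
  define c0 where "c0 = \<i> * of_real (2*w0/(1+v0)^2)"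
  have a: "\<bar>a\<bar> < 1" unfolding a_def by (rule a_bound[OF v0])
  have F: "fourier_coeff (omega0 v0 w0) k = (c0 * Iint a k + cnj (c0 * Iint a (-k))) / (2 * pi)"
    unfolding a_def c0_def by (rule fourier_omega0[OF v0])
  have nc0: "cmod c0 = \<bar>2*w0/(1+v0)^2\<bar>" unfolding c0_def norm_mult norm_of_real by simp
  consider "k = 0" | "k > 0" | "k < 0" by linarith
  then show ?thesis
  proof cases
    case 1
    then show ?thesis using F Iint_nonneg[OF a, of 0] by simp
  next
    case 2
    define n where "n = nat k - 1"
    have k1: "k = int (nat k)" using 2 by simp
    have k2: "-k = - int n - 1" unfolding n_def using 2 by simp
    have "Iint a k = 0" by (subst k1) (rule Iint_nonneg[OF a])
    moreover have "Iint a (-k) = 2 * pi * of_real a ^ n" unfolding k2 by (rule Iint_neg[OF a])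
    ultimately have "fourier_coeff (omega0 v0 w0) k = cnj (c0 * of_real a ^ n)"
      using F by simp
    then have "cmod (fourier_coeff (omega0 v0 w0) k) = cmod c0 * \<bar>a\<bar> ^ n"
      by (simp add: norm_mult norm_power)
    then show ?thesis using 2 nc0 unfolding n_def a_def by simp
  next
    case 3
    define n where "n = nat (-k) - 1"
    have k1: "-k = int (nat (-k))" using 3 by simp
    have k2: "k = - int n - 1" unfolding n_def using 3 by simp
    have "Iint a (-k) = 0" by (subst k1) (rule Iint_nonneg[OF a])
    moreover have "Iint a k = 2 * pi * of_real a ^ n" unfolding k2 by (rule Iint_neg[OF a])
    ultimately have "fourier_coeff (omega0 v0 w0) k = c0 * of_real a ^ n"
      using F by simp
    then have "cmod (fourier_coeff (omega0 v0 w0) k) = cmod c0 * \<bar>a\<bar> ^ n"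
      by (simp add: norm_mult norm_power)
    then show ?thesis using 3 nc0 unfolding n_def a_def by simp
  qed
qed

lemma B0_value:
  fixes v0 w0 :: real
  assumes v0: "v0 > 0"
  shows "B0_norm (omega0 v0 w0) = 2 * \<bar>2*w0/(1+v0)^2\<bar> / (1 - \<bar>(1-v0)/(1+v0)\<bar>)"
proof -
  have "((\<lambda>k::int. if k = 0 then 0 else \<bar>2*w0/(1+v0)^2\<bar> * \<bar>(1-v0)/(1+v0)\<bar> ^ (nat \<bar>k\<bar> - 1))
          has_sum (2 * \<bar>2*w0/(1+v0)^2\<bar> / (1 - \<bar>(1-v0)/(1+v0)\<bar>))) UNIV"
    by (rule int_geom_has_sum) (use a_bound[OF v0] in auto)
  then show ?thesis unfolding B0_norm_def coeff_norm[OF v0] by (rule infsumI)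
qed



lemma I0_int:
  assumes a: "\<bar>a\<bar> < 1"
  shows "((\<lambda>x. 1 / (exp (\<i> * of_real x) - of_real a)) has_integral 0) {-pi..pi}"
proof -
  have "((\<lambda>x. exp (- \<i> * of_int 0 * of_real x) / (exp (\<i> * of_real x) - of_real a)) has_integral Iint a 0) {-pi..pi}"
    unfolding Iint_def by (rule integrable_integral[OF Iint_integrable[OF a]])
  then show ?thesis using Iint_nonneg[OF a, of 0] by simp
qed

lemma K0_int:
  assumes a: "\<bar>a\<bar> < 1"
  shows "((\<lambda>x. 1 / (exp (\<i> * of_real x) - of_real a)^2) has_integral 0) {-pi..pi}"
proof -
  have "((\<lambda>x. exp (- \<i> * of_int 0 * of_real x) / (exp (\<i> * of_real x) - of_real a)^2) has_integral Kint a 0) {-pi..pi}"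
    unfolding Kint_def by (rule integrable_integral[OF Kint_integrable[OF a]])
  then show ?thesis using Kint0[OF a] by simp
qed

lemma pf_identity:
  fixes z w a :: complex
  assumes "z * w = 1" "z \<noteq> a" "w \<noteq> a" "a^2 \<noteq> 1"
  shows "1 / ((z - a) * (w - a)) = (a * (1 / (z - a)) + 1 + a * (1 / (w - a))) / (1 - a^2)"
proof -
  have n1: "z - a \<noteq> 0" "w - a \<noteq> 0" "1 - a^2 \<noteq> 0" using assms by auto
  have "(a * (1 / (z - a)) + 1 + a * (1 / (w - a))) = (a*(w-a) + (z-a)*(w-a) + a*(z-a)) / ((z-a)*(w-a))"
    using n1 by (simp add: field_simps)
  also have "a*(w-a) + (z-a)*(w-a) + a*(z-a) = z * w - a^2" by (simp add: algebra_simps power2_eq_square)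
  also have "\<dots> = 1 - a^2" using assms(1) by simp
  finally show ?thesis using n1 by simp
qed

lemma GG_int:
  assumes a: "\<bar>a\<bar> < 1"
  shows "((\<lambda>x. 1 / ((exp (\<i> * of_real x) - of_real a) * (cnj (exp (\<i> * of_real x)) - of_real a)))
           has_integral (2 * pi / (1 - a^2))) {-pi..pi}"
proof -
  let ?u = "\<lambda>x. 1 / (exp (\<i> * of_real x) - of_real a)"
  have a2: "(of_real a :: complex)^2 \<noteq> 1"
  proof
    assume "(of_real a :: complex)^2 = 1"
    then have "a^2 = 1" by (metis of_real_eq_1_iff of_real_power)
    then show False using a by (metis abs_le_square_iff abs_one less_irrefl power_one one_le_power abs_ge_zero not_le power2_abs abs_square_eq_1)
  qed
  have eq: "1 / ((exp (\<i> * of_real x) - of_real a) * (cnj (exp (\<i> * of_real x)) - of_real a))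
        = (of_real a * ?u x + 1 + of_real a * cnj (?u x)) / (1 - (of_real a)^2)" for x
  proof -
    have zw: "exp (\<i> * of_real x) * cnj (exp (\<i> * of_real x)) = (1::complex)"
      by (simp add: exp_cnj exp_add[symmetric])
    have nz: "exp (\<i> * complex_of_real x) \<noteq> of_real a" using den_bound(2)[OF a, of x] by simp
    have nw: "cnj (exp (\<i> * complex_of_real x)) \<noteq> of_real a"
      using nz by (metis complex_cnj_cnj complex_cnj_complex_of_real)
    have "cnj (?u x) = 1 / (cnj (exp (\<i> * of_real x)) - of_real a)" by simp
    then show ?thesis using pf_identity[OF zw nz nw a2] by simp
  qed
  have h1: "((\<lambda>x. of_real a * ?u x) has_integral 0) {-pi..pi}"
    using has_integral_mult_right[OF I0_int[OF a], of "of_real a"] by simp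
  have h2: "((\<lambda>x. of_real a * cnj (?u x)) has_integral 0) {-pi..pi}"
  proof -
    have "((cnj \<circ> ?u) has_integral cnj 0) {-pi..pi}"
      unfolding has_integral_cnj by (rule I0_int[OF a])
    then show ?thesis using has_integral_mult_right[of "cnj \<circ> ?u" 0 "{-pi..pi}" "of_real a"] by (simp add: o_def)
  qed
  have h3: "((\<lambda>x. 1::complex) has_integral (2 * of_real pi)) {-pi..pi}"
    using has_integral_const_real[of "1::complex" "-pi" pi] by (simp add: scaleR_conv_of_real)
  have "((\<lambda>x. (of_real a * ?u x + 1 + of_real a * cnj (?u x)) / (1 - (of_real a)^2)) has_integral
        ((0 + 2 * of_real pi + 0) / (1 - (of_real a :: complex)^2))) {-pi..pi}"
    by (intro has_integral_divide has_integral_add h1 h2 h3)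
  then show ?thesis unfolding eq by simp
qed



lemma re_sq: "Re ((complex_of_real r)^2) = (cmod (complex_of_real r))^2"
proof -
  have "(complex_of_real r)^2 = complex_of_real (r^2)" by simp
  then show ?thesis by simp
qed

lemma mini3: "(P::real) \<noteq> 0 \<Longrightarrow> v \<noteq> 0 \<Longrightarrow> 2 * (2*w/P)^2 * (2 * pi / (4 * v / P)) = 4 * pi * w^2 / (v * P)"
  by (simp add: field_simps power2_eq_square)

lemma L2_value:
  fixes v0 w0 :: real
  assumes v0: "v0 > 0"
  shows "L2_norm (omega0 v0 w0) = sqrt (4 * pi * w0^2 / (v0 * (1+v0)^2))"
proof -
  define a where "a = (1-v0)/(1+v0)"
  define k where "k = 2*w0/(1+v0)^2"
  define c0 where "c0 = \<i> * complex_of_real k"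
  define u where "u x = 1 / (exp (\<i> * of_real x) - complex_of_real a)" for x
  have a: "\<bar>a\<bar> < 1" unfolding a_def by (rule a_bound[OF v0])
  have G: "gfun v0 w0 x = c0 * u x" for x unfolding gfun_def c0_def u_def a_def k_def by simp
  have om: "omega0 v0 w0 x = c0 * u x + cnj (c0 * u x)" for x unfolding omega0_g[OF v0] G ..
  have sq: "(c0 * u x + cnj (c0 * u x))^2 = c0^2 * (1 / (exp (\<i> * of_real x) - complex_of_real a)^2)
           + cnj (c0^2 * (1 / (exp (\<i> * of_real x) - complex_of_real a)^2))
           + (2 * c0 * cnj c0) * (1 / ((exp (\<i> * of_real x) - of_real a) * (cnj (exp (\<i> * of_real x)) - of_real a)))" for x
    unfolding u_def by (simp add: power2_eq_square algebra_simps)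
  have h1: "((\<lambda>x. c0^2 * (1 / (exp (\<i> * of_real x) - complex_of_real a)^2)) has_integral 0) {-pi..pi}"
    using has_integral_mult_right[OF K0_int[OF a], of "c0^2"] by simp
  have h2: "((\<lambda>x. cnj (c0^2 * (1 / (exp (\<i> * of_real x) - complex_of_real a)^2))) has_integral 0) {-pi..pi}"
    using h1 has_integral_cnj[of "\<lambda>x. c0^2 * (1 / (exp (\<i> * of_real x) - complex_of_real a)^2)" 0 "{-pi..pi}"]
    by (simp add: o_def)
  have h3: "((\<lambda>x. (2 * c0 * cnj c0) * (1 / ((exp (\<i> * of_real x) - of_real a) * (cnj (exp (\<i> * of_real x)) - of_real a))))
       has_integral ((2 * c0 * cnj c0) * (2 * pi / (1 - a^2)))) {-pi..pi}"
    by (rule has_integral_mult_right[OF GG_int[OF a]])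
  have "((\<lambda>x. (c0 * u x + cnj (c0 * u x))^2) has_integral (0 + 0 + (2 * c0 * cnj c0) * (2 * pi / (1 - a^2)))) {-pi..pi}"
    unfolding sq by (intro has_integral_add h1 h2 h3)
  then have "((\<lambda>x. (c0 * u x + cnj (c0 * u x))^2) has_integral ((2 * c0 * cnj c0) * (2 * pi / (1 - a^2)))) {-pi..pi}"
    by simp
  then have "((Re \<circ> (\<lambda>x. (c0 * u x + cnj (c0 * u x))^2)) has_integral Re ((2 * c0 * cnj c0) * (2 * pi / (1 - a^2)))) {-pi..pi}"
    by (rule has_integral_linear[OF _ bounded_linear_Re])
  moreover have "(Re \<circ> (\<lambda>x. (c0 * u x + cnj (c0 * u x))^2)) x = (cmod (omega0 v0 w0 x))^2" for x
  proof -
    have e: "c0 * u x + cnj (c0 * u x) = of_real (2 * Re (c0 * u x))" by (rule complex_add_cnj)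
    show ?thesis unfolding o_def om e by (rule re_sq)
  qed
  moreover have "Re ((2 * c0 * cnj c0) * (2 * pi / (1 - a^2))) = 4 * pi * w0^2 / (v0 * (1+v0)^2)"
  proof -
    have e1: "Re ((2 * c0 * cnj c0) * (2 * pi / (1 - a^2))) = 2 * k^2 * (2 * pi / (1 - a^2))"
      unfolding c0_def by (simp add: power2_eq_square)
    have e2: "1 - a^2 = 4 * v0 / (1+v0)^2"
    proof -
      have p: "1 + v0 \<noteq> 0" using v0 by linarith
      have "1 - a^2 = ((1+v0)^2 - (1-v0)^2) / (1+v0)^2" unfolding a_def using p
        by (simp add: power_divide field_simps)
      also have "(1+v0)^2 - (1-v0)^2 = 4 * v0" by (simp add: power2_eq_square algebra_simps)
      finally show ?thesis .
    qed
    have e3: "2 * k^2 * (2 * pi / (4 * v0 / (1+v0)^2)) = 4 * pi * w0^2 / (v0 * (1+v0)^2)"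
    proof -
      have p: "(1 + v0)^2 \<noteq> 0" "v0 \<noteq> 0" using v0 by simp_all
      show ?thesis unfolding k_def using mini3[OF p] by simp
    qed
    show ?thesis by (simp only: e1) (simp only: e2 e3)
  qed
  ultimately have "((\<lambda>x. (cmod (omega0 v0 w0 x))^2) has_integral (4 * pi * w0^2 / (v0 * (1+v0)^2))) {-pi..pi}"
    by (simp add: o_def)
  then show ?thesis unfolding L2_norm_def by (simp add: integral_unique)
qed



lemma r0_exists: "\<exists>r::real. 1/2 \<le> r \<and> r \<le> 9/10 \<and> exp (-2*r) = 1 - r"
proof -
  let ?f = "\<lambda>r::real. exp (-2*r) - (1 - r)"
  have e2: "exp (1::real) \<ge> 2" using exp_ge_add_one_self[of 1] by simp
  have "?f (1/2) \<le> 0"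
  proof -
    have "exp (-2*(1/2::real)) = inverse (exp 1)" by (simp add: exp_minus)
    also have "\<dots> \<le> 1/2" using le_imp_inverse_le[of 2 "exp 1"] e2 by simp 
    finally show ?thesis by simp
  qed
  moreover have "0 \<le> ?f (9/10)"
  proof -
    have "exp (9/5::real) \<le> exp 2" by simp
    also have "exp (2::real) = exp 1 * exp 1" by (simp flip: exp_add)
    also have "\<dots> \<le> 3 * 3" using exp_le by (intro mult_mono) auto
    finally have "exp (9/5::real) \<le> 9" by simp
    then have "inverse (exp (9/5::real)) \<ge> 1/10" by (simp add: le_divide_eq field_simps)
    moreover have "exp (-2*(9/10::real)) = inverse (exp (9/5))" by (simp add: exp_minus)
    ultimately show ?thesis by simp
  qed
  moreover have "continuous_on {1/2..9/10} ?f" by (intro continuous_intros)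
  ultimately obtain r where "1/2 \<le> r" "r \<le> 9/10" "?f r = 0"
    using IVT'[of ?f "1/2" 0 "9/10"] by auto
  then show ?thesis by auto
qed

lemma mini4: "(M::real) > 0 \<Longrightarrow> E * (-2) * (1 + x^2/M) + E * (2 * x / M) = - (2/M) * E * (x^2 - x + M)"
  by (simp add: field_simps power2_eq_square)

lemma key_ineq:
  fixes r s :: real
  assumes r: "1/2 \<le> r" "r < 1" and er: "exp (-2*r) = 1 - r" and s: "s \<ge> 0"
  shows "s^2 \<le> r * (1 - r) * (exp (2* s) - 1)"
proof -
  define M where "M = r * (1 - r)"
  define m where "m = 1 - r"
  have M: "M > 0" unfolding M_def using r by simp
  have mr: "m \<le> r" "0 \<le> m" unfolding m_def using r by auto
  define \<Phi> where "\<Phi> s = exp (-2* s) * (1 + s^2 / M)" for s :: real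
  have der: "DERIV \<Phi> x :> (- (2/M) * exp (-2*x) * ((x - r) * (x - m)))" for x
  proof -
    have "DERIV \<Phi> x :> (exp (-2*x) * (-2) * (1 + x^2/M) + exp (-2*x) * (2 * x / M))"
      unfolding \<Phi>_def using M by (auto intro!: derivative_eq_intros simp: power2_eq_square)
    moreover have "exp (-2*x) * (-2) * (1 + x^2/M) + exp (-2*x) * (2 * x / M) = - (2/M) * exp (-2*x) * ((x - r) * (x - m))"
    proof -
      have "(x - r) * (x - m) = x^2 - x + M" unfolding m_def M_def by (simp add: algebra_simps power2_eq_square)
      then show ?thesis using mini4[of M "exp (-2*x)" x] M by simp
    qed
    ultimately show ?thesis by simp
  qed
  have P0: "\<Phi> 0 = 1" unfolding \<Phi>_def by simp
  have Pr: "\<Phi> r = 1"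
  proof -
    have "\<Phi> r = (1 - r) * (1 + r^2 / (r * (1 - r)))" unfolding \<Phi>_def M_def er ..
    also have "\<dots> = 1" using r by (simp add: field_simps power2_eq_square)
    finally show ?thesis .
  qed
  have sgn: "- (2/M) * exp (-2*x) * ((x - r) * (x - m)) \<le> 0" if "(x - r) * (x - m) \<ge> 0" for x
  proof -
    have "0 \<le> (2/M) * exp (-2*x) * ((x - r) * (x - m))" using M by (intro mult_nonneg_nonneg[OF _ that]) auto
    then show ?thesis by simp
  qed
  have "\<Phi> s \<le> 1"
  proof -
    consider "s \<le> m" | "m \<le> s" "s \<le> r" | "r \<le> s" by linarith
    then show ?thesis
    proof cases
      case 1
      have "\<Phi> 0 \<ge> \<Phi> s"
      proof (rule DERIV_nonpos_imp_nonincreasing[OF s])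
        fix x assume x: "0 \<le> x" "x \<le> s"
        have h: "(x - r) * (x - m) \<ge> 0" using x 1 mr by (intro mult_nonpos_nonpos) auto
        show "\<exists>y. DERIV \<Phi> x :> y \<and> y \<le> 0" using der[of x] sgn[OF h] by blast
      qed
      then show ?thesis using P0 by simp
    next
      case 2
      have "\<Phi> s \<le> \<Phi> r"
      proof (rule DERIV_nonneg_imp_nondecreasing[OF 2(2)])
        fix x assume x: "s \<le> x" "x \<le> r"
        have "(x - r) * (x - m) \<le> 0" using x 2 mr by (intro mult_nonpos_nonneg) auto
        then have "- (2/M) * exp (-2*x) * ((x - r) * (x - m)) \<ge> 0"
          using M by (intro mult_nonpos_nonpos) auto
        then show "\<exists>y. DERIV \<Phi> x :> y \<and> y \<ge> 0" using der by blast
      qed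
      then show ?thesis using Pr by simp
    next
      case 3
      have "\<Phi> r \<ge> \<Phi> s"
      proof (rule DERIV_nonpos_imp_nonincreasing[OF 3])
        fix x assume x: "r \<le> x" "x \<le> s"
        have h: "(x - r) * (x - m) \<ge> 0" using x 3 mr by (intro mult_nonneg_nonneg) auto
        show "\<exists>y. DERIV \<Phi> x :> y \<and> y \<le> 0" using der[of x] sgn[OF h] by blast
      qed
      then show ?thesis using Pr by simp
    qed
  qed
  then have "exp (-2* s) * (1 + s^2 / M) \<le> 1" unfolding \<Phi>_def .
  then have "1 + s^2 / M \<le> exp (2* s)"
    by (simp add: exp_minus field_simps)
  then have "s^2 / M \<le> exp (2* s) - 1" by simp
  then show ?thesis unfolding M_def[symmetric] using M by (simp add: divide_le_eq mult.commute)
qed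



lemma collapse_root:
  fixes \<nu> v0 w0 :: real
  assumes "\<nu> > 0" and "v0 > 0"
    and collapse: "\<exists>tc>0. (\<forall>t\<in>{0..<tc}. v_c \<nu> v0 w0 t > 0) \<and>
                   ((v_c \<nu> v0 w0 \<longlongrightarrow> 0) (at_left tc) \<or>
                    filterlim (v_c \<nu> v0 w0) at_top (at_left tc))"
  shows "\<exists>tc>0. clm_den \<nu> v0 w0 tc = 0 \<or> -1 + w0 / (1 + v0) * tc + (exp (\<nu> * tc) + 1) / 2 * (1 + v0) = 0"
proof -
  obtain tc where tc: "tc > 0" and lim: "(v_c \<nu> v0 w0 \<longlongrightarrow> 0) (at_left tc) \<or> filterlim (v_c \<nu> v0 w0) at_top (at_left tc)"
    using collapse by blast
  show ?thesis
  proof (cases "clm_den \<nu> v0 w0 tc = 0")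
    case True
    then show ?thesis using tc by blast
  next
    case False
    have "isCont (v_c \<nu> v0 w0) tc"
      unfolding v_c_def[abs_def] using False unfolding clm_den_def
      by (intro continuous_intros) auto
    then have cont: "(v_c \<nu> v0 w0 \<longlongrightarrow> v_c \<nu> v0 w0 tc) (at_left tc)"
      using continuous_at_imp_continuous_at_within continuous_within by blast
    have nb: "at_left tc \<noteq> bot" by simp
    from lim show ?thesis
    proof
      assume l0: "(v_c \<nu> v0 w0 \<longlongrightarrow> 0) (at_left tc)"
      have "v_c \<nu> v0 w0 tc = 0" using tendsto_unique[OF nb cont l0] .
      then have "-1 + w0 / (1 + v0) * tc + (exp (\<nu> * tc) + 1) / 2 * (1 + v0) = 0"
        using False unfolding v_c_def by simp
      then show ?thesis using tc by blast
    next
      assume "filterlim (v_c \<nu> v0 w0) at_top (at_left tc)"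
      then have "filterlim (v_c \<nu> v0 w0) at_infinity (at_left tc)"
        by (rule filterlim_at_top_imp_at_infinity)
      then have False using not_tendsto_and_filterlim_at_infinity[OF nb cont] by blast
      then show ?thesis ..
    qed
  qed
qed



lemma exp_ge_es: "(s::real) \<ge> 0 \<Longrightarrow> exp s \<ge> exp 1 * s"
proof -
  have "s \<le> exp (s - 1)" using exp_ge_add_one_self[of "s - 1"] by simp
  then have "exp 1 * s \<le> exp 1 * exp (s - 1)" by simp
  also have "\<dots> = exp s" by (simp flip: exp_add)
  finally show ?thesis .
qed

lemma amgm: "((p::real) + q * v)^2 \<ge> 4 * p * q * v"
proof -
  have "((p::real) + q * v)^2 - 4 * p * q * v = (p - q * v)^2" by (simp add: power2_eq_square algebra_simps)
  then show ?thesis by (metis diff_ge_0_iff_ge zero_le_power2)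
qed

lemma QA:
  fixes s v0 :: real
  assumes s: "s > 0" and v0: "v0 > 0"
  defines "A \<equiv> 1 + (exp s - 1) / 2 * (1 + v0)"
  shows "A \<ge> exp 1 * s * min v0 1" and "A^2 \<ge> v0 * ((exp s)^2 - 1)" and "A > 0"
proof -
  define E where "E = exp s"
  have E1: "E \<ge> 1" unfolding E_def using s by simp
  have Ees: "E \<ge> exp 1 * s" unfolding E_def using exp_ge_es s by simp
  have Aeq: "A = (1 + E)/2 + (E - 1)/2 * v0" unfolding A_def E_def by (simp add: field_simps)
  have "(E - 1)/2 * v0 \<ge> 0" using E1 v0 by simp
  moreover have "(1 + E)/2 > 0" using E1 by simp
  ultimately show "A > 0" unfolding Aeq by (rule add_pos_nonneg[rotated])
  show "A \<ge> exp 1 * s * min v0 1"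
  proof (cases "v0 \<ge> 1")
    case True
    have "(E - 1)/2 * v0 \<ge> (E - 1)/2 * 1" using True E1 by (intro mult_left_mono) auto
    then have "A \<ge> (1 + E)/2 + (E - 1)/2 * 1" unfolding Aeq by (rule add_left_mono)
    then have "A \<ge> E" by (simp add: field_simps)
    then show ?thesis using Ees True by simp
  next
    case False
    have "A = (1 - v0) * (1 + E) / 2 + v0 * E" unfolding Aeq by (simp add: field_simps)
    moreover have "(1 - v0) * (1 + E) / 2 \<ge> 0" using False E1 by simp
    moreover have "v0 * E \<ge> v0 * (exp 1 * s)" using Ees v0 by (intro mult_left_mono) auto
    moreover have "exp 1 * s * min v0 1 = v0 * (exp 1 * s)" using False by simp
    ultimately show ?thesis by linarith
  qed
  have h1: "A^2 \<ge> 4 * ((1 + E)/2) * ((E - 1)/2) * v0" unfolding Aeq by (rule amgm)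
  have h2: "4 * ((1 + E)/2) * ((E - 1)/2) * v0 = v0 * (E^2 - 1)" by (simp add: power2_eq_square field_simps)
  have "A^2 \<ge> v0 * (E^2 - 1)" using h1 unfolding h2 .
  then show "A^2 \<ge> v0 * ((exp s)^2 - 1)" unfolding E_def .
qed

lemma QB:
  fixes s v0 :: real
  assumes s: "s > 0" and v0: "v0 > 0"
  defines "B \<equiv> (exp s + 1) / 2 * (1 + v0) - 1"
  shows "B \<ge> exp 1 * s * min v0 1" and "B^2 \<ge> v0 * ((exp s)^2 - 1)" and "B > 0"
proof -
  define E where "E = exp s"
  have E1: "E \<ge> 1" unfolding E_def using s by simp
  have Ees: "E \<ge> exp 1 * s" unfolding E_def using exp_ge_es s by simp
  have Beq: "B = (E - 1)/2 + (1 + E)/2 * v0" unfolding B_def E_def by (simp add: field_simps)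
  have "(1 + E)/2 * v0 > 0" using E1 v0 by simp
  moreover have "(E - 1)/2 \<ge> 0" using E1 by simp
  ultimately show "B > 0" unfolding Beq by (rule add_nonneg_pos[rotated])
  show "B \<ge> exp 1 * s * min v0 1"
  proof (cases "v0 \<ge> 1")
    case True
    have "(1 + E)/2 * v0 \<ge> (1 + E)/2 * 1" using True E1 by (intro mult_left_mono) auto
    then have "B \<ge> (E - 1)/2 + (1 + E)/2 * 1" unfolding Beq by (rule add_left_mono)
    then have "B \<ge> E" by (simp add: field_simps)
    then show ?thesis using Ees True by simp
  next
    case False
    have "B = (1 - v0) * (E - 1) / 2 + v0 * E" unfolding Beq by (simp add: field_simps)
    moreover have "(1 - v0) * (E - 1) / 2 \<ge> 0" using False E1 by simp
    moreover have "v0 * E \<ge> v0 * (exp 1 * s)" using Ees v0 by (intro mult_left_mono) auto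
    moreover have "exp 1 * s * min v0 1 = v0 * (exp 1 * s)" using False by simp
    ultimately show ?thesis by linarith
  qed
  have h1: "B^2 \<ge> 4 * ((E - 1)/2) * ((1 + E)/2) * v0" unfolding Beq by (rule amgm)
  have h2: "4 * ((E - 1)/2) * ((1 + E)/2) * v0 = v0 * (E^2 - 1)" by (simp add: power2_eq_square field_simps)
  have "B^2 \<ge> v0 * (E^2 - 1)" using h1 unfolding h2 .
  then show "B^2 \<ge> v0 * ((exp s)^2 - 1)" unfolding E_def .
qed



lemma mini5: "(P::real) > 0 \<Longrightarrow> m > 0 \<Longrightarrow> 2 * (2 * W / P^2) / (2 * m / P) = 2 * W / (P * m)"
  by (simp add: field_simps power2_eq_square)

lemma B0_simpl:
  fixes v0 w0 :: real
  assumes v0: "v0 > 0"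
  shows "B0_norm (omega0 v0 w0) = 2 * \<bar>w0\<bar> / ((1+v0) * min v0 1)"
proof -
  have p: "1 + v0 > 0" using v0 by simp
  have d: "1 - \<bar>(1-v0)/(1+v0)\<bar> = 2 * min v0 1 / (1+v0)"
  proof (cases "v0 \<le> 1")
    case True
    have "(1-v0)/(1+v0) \<ge> 0" using True p by simp
    then have "1 - \<bar>(1-v0)/(1+v0)\<bar> = 1 - (1-v0)/(1+v0)" by (simp only: abs_of_nonneg)
    also have "\<dots> = 2 * v0 / (1+v0)" using p by (simp add: field_simps)
    finally show ?thesis using True by simp
  next
    case False
    have "(1-v0)/(1+v0) \<le> 0" using False p by (simp add: divide_nonpos_pos)
    then have "1 - \<bar>(1-v0)/(1+v0)\<bar> = 1 + (1-v0)/(1+v0)" by (simp only: abs_of_nonpos)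
    also have "\<dots> = 2 / (1+v0)" using p by (simp add: field_simps)
    finally show ?thesis using False by simp
  qed
  have m: "min v0 1 > 0" using v0 by simp
  have "B0_norm (omega0 v0 w0) = 2 * (2 * \<bar>w0\<bar> / (1+v0)^2) / (2 * min v0 1 / (1+v0))"
    unfolding B0_value[OF v0] d using p by (simp add: abs_mult)
  also have "\<dots> = 2 * \<bar>w0\<bar> / ((1+v0) * min v0 1)"
    using mini5[of "1+v0" "min v0 1" "\<bar>w0\<bar>"] p m by simp
  finally show ?thesis .
qed

theorem mainTheorem15:
  fixes \<nu> v0 w0 :: real
  assumes "\<nu> > 0" and "v0 > 0" and "w0 \<noteq> 0"
    and collapse: "\<exists>tc>0. (\<forall>t\<in>{0..<tc}. v_c \<nu> v0 w0 t > 0) \<and>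
                   ((v_c \<nu> v0 w0 \<longlongrightarrow> 0) (at_left tc) \<or>
                    filterlim (v_c \<nu> v0 w0) at_top (at_left tc))"
  shows "B0_norm (omega0 v0 w0) \<ge> 2 * exp 1 * \<nu>
         \<and> L2_norm (omega0 v0 w0) \<ge>
             2 * sqrt pi * \<nu> / sqrt (SUP s\<in>{0::real..}. exp (- 2 * s) - (1 - s)^2)"
proof -
  note nu = assms(1) and v0 = assms(2)
  have p: "1 + v0 > 0" using v0 by simp
  obtain tc where tc: "tc > 0" and root: "clm_den \<nu> v0 w0 tc = 0 \<or> -1 + w0 / (1 + v0) * tc + (exp (\<nu> * tc) + 1) / 2 * (1 + v0) = 0"
    using collapse_root[OF nu v0 collapse] by blast
  define s where "s = \<nu> * tc"
  have s: "s > 0" unfolding s_def using nu tc by simp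
  obtain Q where Qpos: "Q > 0" and Qw: "\<bar>w0\<bar> * tc = (1+v0) * Q"
    and Q1: "Q \<ge> exp 1 * s * min v0 1" and Q2: "Q^2 \<ge> v0 * ((exp s)^2 - 1)"
  proof (cases "clm_den \<nu> v0 w0 tc = 0")
    case True
    define A where "A = 1 + (exp s - 1) / 2 * (1 + v0)"
    have A: "A \<ge> exp 1 * s * min v0 1" "A^2 \<ge> v0 * ((exp s)^2 - 1)" "A > 0"
      using QA[OF s v0] unfolding A_def by auto
    have "w0 / (1 + v0) * tc = A" using True unfolding clm_den_def A_def s_def by simp
    then have "w0 * tc = (1+v0) * A" using p by (simp add: field_simps)
    moreover then have "w0 > 0" using A(3) p tc by (metis mult_pos_pos zero_less_mult_pos2)
    ultimately have "\<bar>w0\<bar> * tc = (1+v0) * A" by simp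
    then show ?thesis using that A by blast
  next
    case False
    then have r: "-1 + w0 / (1 + v0) * tc + (exp (\<nu> * tc) + 1) / 2 * (1 + v0) = 0" using root by blast
    define B where "B = (exp s + 1) / 2 * (1 + v0) - 1"
    have B: "B \<ge> exp 1 * s * min v0 1" "B^2 \<ge> v0 * ((exp s)^2 - 1)" "B > 0"
      using QB[OF s v0] unfolding B_def by auto
    have "w0 / (1 + v0) * tc = - B" using r unfolding B_def s_def by simp
    then have e: "w0 * tc = - ((1+v0) * B)" using p by (simp add: field_simps)
    have "(1+v0) * B > 0" using p B(3) by simp
    then have "w0 * tc < 0" using e by simp
    then have "w0 < 0" using tc by (simp add: mult_less_0_iff)
    then have "\<bar>w0\<bar> * tc = (1+v0) * B" using e by simp
    then show ?thesis using that B by blast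
  qed
  have m: "min v0 1 > 0" using v0 by simp
  have B0: "B0_norm (omega0 v0 w0) \<ge> 2 * exp 1 * \<nu>"
  proof -
    have "B0_norm (omega0 v0 w0) = 2 * (\<bar>w0\<bar> * tc) / ((1+v0) * min v0 1 * tc)"
      unfolding B0_simpl[OF v0] using tc by simp
    also have "\<dots> = 2 * Q / (min v0 1 * tc)" unfolding Qw using p by simp
    finally have eq: "B0_norm (omega0 v0 w0) = 2 * Q / (min v0 1 * tc)" .
    have "2 * exp 1 * \<nu> * (min v0 1 * tc) = 2 * (exp 1 * s * min v0 1)" unfolding s_def by (simp add: mult_ac)
    also have "\<dots> \<le> 2 * Q" using Q1 by simp
    finally show ?thesis unfolding eq using m tc by (simp add: le_divide_eq)
  qed
  obtain r :: real where r: "1/2 \<le> r" "r \<le> 9/10" "exp (-2*r) = 1 - r" using r0_exists by blast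
  define M0 where "M0 = r * (1 - r)"
  have M0: "M0 > 0" unfolding M0_def using r by simp
  define Msup where "Msup = (SUP s\<in>{0::real..}. exp (- 2 * s) - (1 - s)^2)"
  have "M0 \<le> Msup"
  proof -
    have bdd: "bdd_above ((\<lambda>s. exp (- 2 * s) - (1 - s)^2) ` {0::real..})"
    proof (rule bdd_aboveI2)
      fix x :: real assume "x \<in> {0..}"
      then have "exp (- 2 * x) \<le> 1" by simp
      then show "exp (- 2 * x) - (1 - x)^2 \<le> 1" by (smt (verit) zero_le_power2)
    qed
    have "exp (- 2 * r) - (1 - r)^2 \<le> Msup" unfolding Msup_def
      by (rule cSUP_upper[OF _ bdd]) (use r in simp)
    moreover have "exp (- 2 * r) - (1 - r)^2 = M0" unfolding M0_def using r(3)
      by (simp add: power2_eq_square algebra_simps)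
    ultimately show ?thesis by simp
  qed
  then have Ms: "Msup > 0" using M0 by simp
  have key: "s^2 \<le> M0 * ((exp s)^2 - 1)"
  proof -
    have "s^2 \<le> r * (1 - r) * (exp (2 * s) - 1)" by (rule key_ineq) (use r s in auto)
    moreover have "exp (2 * s) = (exp s)^2" by (simp add: power2_eq_square flip: exp_add)
    ultimately show ?thesis unfolding M0_def by simp
  qed
  define X where "X = 4 * pi * w0^2 / (v0 * (1+v0)^2)"
  have Xeq: "X = 4 * pi * Q^2 / (v0 * tc^2)"
  proof -
    have "w0^2 * tc^2 = (1+v0)^2 * Q^2" using Qw by (metis power2_abs power_mult_distrib)
    then have "w0^2 = (1+v0)^2 * Q^2 / tc^2" using tc by (simp add: field_simps)
    then show ?thesis unfolding X_def using p v0 tc by (simp add: field_simps)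
  qed
  have "4 * pi * \<nu>^2 / Msup \<le> X"
  proof -
    have "4 * pi * \<nu>^2 / Msup \<le> 4 * pi * \<nu>^2 / M0"
      using \<open>M0 \<le> Msup\<close> M0 by (intro divide_left_mono) auto
    also have "\<dots> = 4 * pi * (v0 * s^2 / M0) / (v0 * tc^2)"
      unfolding s_def using v0 tc M0 by (simp add: field_simps power2_eq_square)
    also have "\<dots> \<le> 4 * pi * Q^2 / (v0 * tc^2)"
    proof -
      have "s^2 / M0 \<le> (exp s)^2 - 1" using key M0 by (simp add: divide_le_eq mult.commute)
      then have "v0 * s^2 / M0 \<le> v0 * ((exp s)^2 - 1)" using v0
        by (metis mult_left_mono less_eq_real_def times_divide_eq_right)
      then have "v0 * s^2 / M0 \<le> Q^2" using Q2 by simp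
      then show ?thesis using v0 tc by (intro divide_right_mono mult_left_mono) auto
    qed
    finally show ?thesis unfolding Xeq .
  qed
  then have "sqrt (4 * pi * \<nu>^2 / Msup) \<le> sqrt X" by simp
  moreover have "sqrt (4 * pi * \<nu>^2 / Msup) = 2 * sqrt pi * \<nu> / sqrt Msup"
    using nu Ms by (simp add: real_sqrt_mult real_sqrt_divide)
  ultimately have L2: "L2_norm (omega0 v0 w0) \<ge> 2 * sqrt pi * \<nu> / sqrt Msup"
    unfolding L2_value[OF v0] X_def by simp
  show ?thesis using B0 L2 unfolding Msup_def by simp
qed


end
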